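(* Let $K\ge 2$ and let $g(\mathbf{x})=\sum_{j=1}^K \pi_j\,\phi(\mathbf{x};\boldsymbol{\mu}_j,\Sigma_j)$, $\mathbf{x}\in\mathbb{R}^D$, be a mixture of $D$-variate normal densities with $\pi_j\in[0,1]$, $\sum_j\pi_j=1$ and positive definite $\Sigma_j$. Fix $\boldsymbol{\alpha}\in\mathcal{S}_K$ and let $\mathbf{w}\in\mathbf{W}$ (defined below). Then along the line $\{\mathbf{x}^*(\boldsymbol{\alpha})+\delta\mathbf{w}:\delta\in\mathbb{R}\}$ the function $g$ attains its maximum value at $\delta=0$.
   Context: $\phi(\mathbf{x};\boldsymbol{\mu},\Sigma)$ is the normal density with mean $\boldsymbol{\mu}$ and covariance $\Sigma$. $\mathcal{S}_K=\{\boldsymbol{\alpha}\in\mathbb{R}^K:\alpha_i\in[0,1],\sum_i\alpha_i=1\}$. The ridgeline function is $\mathbf{x}^*(\boldsymbol{\alpha})=S_{\boldsymbol{\alpha}}^{-1}\sum_{j=1}^K\alpha_j\Sigma_j^{-1}\boldsymbol{\mu}_j$, where $S_{\boldsymbol{\alpha}}=\sum_{j=1}^K\alpha_j\Sigma_j^{-1}$. Set $\mathbf{v}_j=\Sigma_j^{-1}(\mathbf{x}^*(\boldsymbol{\alpha})-\boldsymbol{\mu}_j)$ for $j=1,\dots,K$, and $\mathbf{d}_j=S_{\boldsymbol{\alpha}}^{-1}(\mathbf{v}_j-\mathbf{v}_K)$ for $j=1,\dots,K-1$ (the derivative vectors of $\mathbf{x}^*$ with respect to $\alpha_1,\dots,\alpha_{K-1}$).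 Define $\mathbf{W}=\{\mathbf{w}\in\mathbb{R}^D:\mathbf{w}'S_{\boldsymbol{\alpha}}\mathbf{d}_j=0\text{ for all }j=1,\dots,K-1\}$. *)

theory Defs
  imports "HOL-Analysis.Analysis"
begin

text \<open>Components are indexed by j in {0..<K} (paper: 1..K); the paper's index K is K-1 here.\<close>

definition pos_def_mat :: "real^'n^'n \<Rightarrow> bool" where
  "pos_def_mat A \<longleftrightarrow> transpose A = A \<and> (\<forall>x. x \<noteq> 0 \<longrightarrow> x \<bullet> (A *v x) > 0)"

definition normal_density :: "real^'n \<Rightarrow> real^'n^'n \<Rightarrow> real^'n \<Rightarrow> real" where
  "normal_density mu Sig x =
     exp (- (1/2) * ((x - mu) \<bullet> (matrix_inv Sig *v (x - mu))))
     / sqrt ((2 * pi) ^ CARD('n) * det Sig)"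

definition mixture_density ::
  "nat \<Rightarrow> (nat \<Rightarrow> real) \<Rightarrow> (nat \<Rightarrow> real^'n) \<Rightarrow> (nat \<Rightarrow> real^'n^'n) \<Rightarrow> real^'n \<Rightarrow> real" where
  "mixture_density K p mu Sig x = (\<Sum>j<K. p j * normal_density (mu j) (Sig j) x)"

definition prob_simplex :: "nat \<Rightarrow> (nat \<Rightarrow> real) \<Rightarrow> bool" where
  "prob_simplex K a \<longleftrightarrow> (\<forall>j<K. 0 \<le> a j \<and> a j \<le> 1) \<and> (\<Sum>j<K. a j) = 1"

definition S_alpha :: "nat \<Rightarrow> (nat \<Rightarrow> real) \<Rightarrow> (nat \<Rightarrow> real^'n^'n) \<Rightarrow> real^'n^'n" where
  "S_alpha K a Sig = (\<Sum>j<K. a j *\<^sub>R matrix_inv (Sig j))"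

definition ridgeline ::
  "nat \<Rightarrow> (nat \<Rightarrow> real) \<Rightarrow> (nat \<Rightarrow> real^'n) \<Rightarrow> (nat \<Rightarrow> real^'n^'n) \<Rightarrow> real^'n" where
  "ridgeline K a mu Sig =
     matrix_inv (S_alpha K a Sig) *v (\<Sum>j<K. a j *\<^sub>R (matrix_inv (Sig j) *v mu j))"

definition ridge_v ::
  "nat \<Rightarrow> (nat \<Rightarrow> real) \<Rightarrow> (nat \<Rightarrow> real^'n) \<Rightarrow> (nat \<Rightarrow> real^'n^'n) \<Rightarrow> nat \<Rightarrow> real^'n" where
  "ridge_v K a mu Sig j = matrix_inv (Sig j) *v (ridgeline K a mu Sig - mu j)"

definition ridge_d ::
  "nat \<Rightarrow> (nat \<Rightarrow> real) \<Rightarrow> (nat \<Rightarrow> real^'n) \<Rightarrow> (nat \<Rightarrow> real^'n^'n) \<Rightarrow> nat \<Rightarrow> real^'n" where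
  "ridge_d K a mu Sig j =
     matrix_inv (S_alpha K a Sig) *v (ridge_v K a mu Sig j - ridge_v K a mu Sig (K - 1))"

definition W_set ::
  "nat \<Rightarrow> (nat \<Rightarrow> real) \<Rightarrow> (nat \<Rightarrow> real^'n) \<Rightarrow> (nat \<Rightarrow> real^'n^'n) \<Rightarrow> (real^'n) set" where
  "W_set K a mu Sig =
     {w. \<forall>j < K - 1. w \<bullet> (S_alpha K a Sig *v ridge_d K a mu Sig j) = 0}"

end

theory Submission
  imports Defs
begin

lemma inv_props:
  fixes A :: "real^'n^'n"
  assumes "invertible A"
  shows "A ** matrix_inv A = mat 1" "matrix_inv A ** A = mat 1"
proof -
  have "\<exists>A'. A ** A' = mat 1 \<and> A' ** A = mat 1" using assms invertible_def by blast
  then have "A ** matrix_inv A = mat 1 \<and> matrix_inv A ** A = mat 1"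
    unfolding matrix_inv_def by (rule someI_ex)
  then show "A ** matrix_inv A = mat 1" "matrix_inv A ** A = mat 1" by auto
qed

lemma pd_invertible:
  fixes A :: "real^'n^'n"
  assumes "\<forall>x. x \<noteq> 0 \<longrightarrow> x \<bullet> (A *v x) > 0"
  shows "invertible A"
proof -
  have "\<forall>x. A *v x = 0 \<longrightarrow> x = 0"
    using assms by (metis inner_zero_right less_irrefl)
  then show ?thesis using matrix_left_invertible_ker invertible_left_inverse by blast
qed

lemma sym_dot:
  fixes A :: "real^'n^'n"
  assumes "transpose A = A"
  shows "x \<bullet> (A *v y) = y \<bullet> (A *v x)"
proof -
  have "x \<bullet> (A *v y) = (x v* A) \<bullet> y" by (simp add: dot_lmul_matrix)
  also have "x v* A = transpose A *v x" by simp
  finally show ?thesis using assms by (simp add: inner_commute)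
qed

lemma inv_sym:
  fixes A :: "real^'n^'n"
  assumes "transpose A = A" "invertible A"
  shows "transpose (matrix_inv A) = matrix_inv A"
proof -
  note i = inv_props[OF assms(2)]
  have "transpose (matrix_inv A) ** A = mat 1"
    by (metis assms(1) i(1) matrix_transpose_mul transpose_mat)
  then have "transpose (matrix_inv A) = transpose (matrix_inv A) ** (A ** matrix_inv A)"
    using i by simp
  also have "\<dots> = matrix_inv A"
    by (simp add: matrix_mul_assoc \<open>transpose (matrix_inv A) ** A = mat 1\<close>)
  finally show ?thesis .
qed

lemma pd_inv_pd:
  fixes A :: "real^'n^'n"
  assumes "pos_def_mat A"
  shows "invertible A" "transpose (matrix_inv A) = matrix_inv A"
    "\<forall>x. x \<noteq> 0 \<longrightarrow> x \<bullet> (matrix_inv A *v x) > 0"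
proof -
  show inv: "invertible A" using assms pd_invertible pos_def_mat_def by blast
  have s: "transpose A = A" using assms pos_def_mat_def by blast
  show "transpose (matrix_inv A) = matrix_inv A" using inv_sym[OF s inv] .
  note i = inv_props[OF inv]
  show "\<forall>x. x \<noteq> 0 \<longrightarrow> x \<bullet> (matrix_inv A *v x) > 0"
  proof (intro allI impI)
    fix x :: "real^'n" assume x: "x \<noteq> 0"
    define y where "y = matrix_inv A *v x"
    have xy: "x = A *v y" unfolding y_def by (simp add: matrix_vector_mul_assoc i)
    then have "y \<noteq> 0" using x by auto
    then have "y \<bullet> (A *v y) > 0" using assms pos_def_mat_def by blast
    then show "x \<bullet> (matrix_inv A *v x) > 0"
      by (simp add: xy[symmetric] y_def[symmetric] inner_commute)
  qed
qed

lemma scaleR_mat_vec: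
  fixes M :: "real^'n^'m"
  shows "(c *\<^sub>R M) *v x = c *\<^sub>R (M *v x)"
  by (simp add: vec_eq_iff matrix_vector_mult_def sum_distrib_left mult.assoc)

lemma sum_mat_vec:
  fixes M :: "nat \<Rightarrow> real^'n^'n"
  shows "(\<Sum>j<K. a j *\<^sub>R M j) *v x = (\<Sum>j<K. a j *\<^sub>R (M j *v x))"
proof (induction K)
  case 0 then show ?case by simp
next
  case (Suc K)
  have "(a K *\<^sub>R M K) *v x = a K *\<^sub>R (M K *v x)"
    by (simp add: vec_eq_iff matrix_vector_mult_def sum_distrib_left mult.assoc)
  then show ?case using Suc by (simp add: matrix_vector_mult_add_rdistrib)
qed

lemma pd_det_pos:
  fixes A :: "real^'n^'n"
  assumes "pos_def_mat A"
  shows "det A > 0"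
proof (rule ccontr)
  assume neg: "\<not> det A > 0"
  define M where "M t = (1 - t) *\<^sub>R (mat 1 :: real^'n^'n) + t *\<^sub>R A" for t :: real
  define f where "f t = det (M t)" for t
  have Apd: "\<forall>x. x \<noteq> 0 \<longrightarrow> x \<bullet> (A *v x) > 0" using assms pos_def_mat_def by blast
  have Mv: "M t *v x = (1 - t) *\<^sub>R x + t *\<^sub>R (A *v x)" for t x
    unfolding M_def by (simp add: matrix_vector_mult_add_rdistrib scaleR_mat_vec)
  have inv: "invertible (M t)" if "0 \<le> t" "t \<le> 1" for t
  proof (rule pd_invertible)
    show "\<forall>x. x \<noteq> 0 \<longrightarrow> x \<bullet> (M t *v x) > 0"
    proof (intro allI impI)
      fix x :: "real^'n" assume x: "x \<noteq> 0"
      have "x \<bullet> (M t *v x) = (1 - t) * (x \<bullet> x) + t * (x \<bullet> (A *v x))"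
        by (simp add: Mv inner_add_right)
      moreover have "x \<bullet> x > 0" using x by simp
      moreover have "x \<bullet> (A *v x) > 0" using Apd x by blast
      ultimately show "x \<bullet> (M t *v x) > 0" using that
        by (smt (verit) mult_nonneg_nonneg mult_pos_pos)
    qed
  qed
  have cont: "continuous_on {0..1} f"
    unfolding f_def M_def det_def by (intro continuous_intros)
  have f0: "f 0 = 1" unfolding f_def M_def by simp
  have f1: "f 1 \<le> 0" unfolding f_def M_def using neg by simp
  obtain t where t: "0 \<le> t" "t \<le> 1" "f t = 0"
    using IVT2'[where f=f and a=0 and b=1 and y=0, OF f1 _ _ cont] f0 by auto
  then show False using inv[OF t(1,2)] invertible_det_nz f_def by auto
qed

theorem theorem2:
  fixes K :: nat and p alpha :: "nat \<Rightarrow> real"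
    and mu :: "nat \<Rightarrow> real^'n" and Sig :: "nat \<Rightarrow> real^'n^'n" and w :: "real^'n"
  assumes "K \<ge> 2"
    and "\<forall>j<K. 0 \<le> p j \<and> p j \<le> 1" and "(\<Sum>j<K. p j) = 1"
    and "\<forall>j<K. pos_def_mat (Sig j)"
    and "prob_simplex K alpha"
    and "w \<in> W_set K alpha mu Sig"
  shows "\<forall>\<delta>::real.
           mixture_density K p mu Sig (ridgeline K alpha mu Sig + \<delta> *\<^sub>R w)
           \<le> mixture_density K p mu Sig (ridgeline K alpha mu Sig)"
proof
  fix \<delta> :: real
  define Ai where "Ai j = matrix_inv (Sig j)" for j
  define S where "S = S_alpha K alpha Sig"
  define xs where "xs = ridgeline K alpha mu Sig"
  define v where "v j = ridge_v K alpha mu Sig j" for j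
  have Aisym: "transpose (Ai j) = Ai j" if "j < K" for j
    unfolding Ai_def using pd_inv_pd(2) assms(4) that by blast
  have Aipd: "\<forall>x. x \<noteq> 0 \<longrightarrow> x \<bullet> (Ai j *v x) > 0" if "j < K" for j
    unfolding Ai_def using pd_inv_pd(3) assms(4) that by blast
  have Aipsd: "x \<bullet> (Ai j *v x) \<ge> 0" if "j < K" for j x
    using Aipd[OF that, rule_format, of x] by (cases "x = 0") auto
  have al: "\<forall>j<K. 0 \<le> alpha j" "(\<Sum>j<K. alpha j) = 1"
    using assms(5) prob_simplex_def by auto
  have Sv: "S *v x = (\<Sum>j<K. alpha j *\<^sub>R (Ai j *v x))" for x
    unfolding S_def S_alpha_def Ai_def by (rule sum_mat_vec)
  have Spd: "\<forall>x. x \<noteq> 0 \<longrightarrow> x \<bullet> (S *v x) > 0"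
  proof (intro allI impI)
    fix x :: "real^'n" assume x: "x \<noteq> 0"
    obtain k where k: "k < K" "alpha k > 0"
    proof (rule ccontr)
      assume "\<not> thesis"
      then have "\<forall>j<K. alpha j = 0" using al(1) that by force
      then show False using al(2) by simp
    qed
    have eq: "x \<bullet> (S *v x) = (\<Sum>j<K. alpha j * (x \<bullet> (Ai j *v x)))"
      by (simp add: Sv inner_sum_right)
    have "alpha k * (x \<bullet> (Ai k *v x)) > 0" using k Aipd x by auto
    also have "alpha k * (x \<bullet> (Ai k *v x)) \<le> (\<Sum>j<K. alpha j * (x \<bullet> (Ai j *v x)))"
      by (rule member_le_sum) (use k al Aipsd in auto)
    finally show "x \<bullet> (S *v x) > 0" using eq by simp
  qed
  have Sinv: "S ** matrix_inv S = mat 1" using inv_props(1)[OF pd_invertible[OF Spd]] .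
  have Sxs: "S *v xs = (\<Sum>j<K. alpha j *\<^sub>R (Ai j *v mu j))"
    unfolding xs_def ridgeline_def S_def[symmetric] Ai_def
    by (simp add: matrix_vector_mul_assoc Sinv)
  have vdef: "v j = Ai j *v (xs - mu j)" for j
    unfolding v_def ridge_v_def Ai_def xs_def by simp
  have sumv: "(\<Sum>j<K. alpha j *\<^sub>R v j) = 0"
  proof -
    have "(\<Sum>j<K. alpha j *\<^sub>R v j) = (\<Sum>j<K. alpha j *\<^sub>R (Ai j *v xs)) - (\<Sum>j<K. alpha j *\<^sub>R (Ai j *v mu j))"
      by (simp add: vdef matrix_vector_mult_diff_distrib scaleR_diff_right sum_subtractf)
    also have "\<dots> = 0" using Sxs Sv by simp
    finally show ?thesis .
  qed
  have wW: "w \<bullet> (v j - v (K - 1)) = 0" if "j < K - 1" for j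
  proof -
    have "w \<bullet> (S *v ridge_d K alpha mu Sig j) = 0"
      using assms(6) that unfolding W_set_def S_def by blast
    then show ?thesis unfolding ridge_d_def S_def[symmetric] v_def
      by (simp add: matrix_vector_mul_assoc Sinv)
  qed
  have weq: "w \<bullet> v j = w \<bullet> v (K - 1)" if "j < K" for j
  proof (cases "j < K - 1")
    case True then show ?thesis using wW[OF True] by (simp add: inner_diff_right)
  next
    case False then have "j = K - 1" using that by simp
    then show ?thesis by simp
  qed
  have "0 = w \<bullet> (\<Sum>j<K. alpha j *\<^sub>R v j)" using sumv by simp
  also have "\<dots> = (\<Sum>j<K. alpha j * (w \<bullet> v j))" by (simp add: inner_sum_right)
  also have "\<dots> = (\<Sum>j<K. alpha j * (w \<bullet> v (K - 1)))"
    by (intro sum.cong refl) (metis weq lessThan_iff)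
  also have "\<dots> = (\<Sum>j<K. alpha j) * (w \<bullet> v (K - 1))" by (rule sum_distrib_right[symmetric])
  also have "\<dots> = w \<bullet> v (K - 1)" using al(2) by simp
  finally have w00: "0 = w \<bullet> v (K - 1)" .
  have w0: "w \<bullet> v j = 0" if "j < K" for j using weq[OF that] w00 by linarith
  have quad: "(xs + \<delta> *\<^sub>R w - mu j) \<bullet> (Ai j *v (xs + \<delta> *\<^sub>R w - mu j))
      \<ge> (xs - mu j) \<bullet> (Ai j *v (xs - mu j))" if j: "j < K" for j
  proof -
    define u where "u = xs - mu j"
    have e: "xs + \<delta> *\<^sub>R w - mu j = u + \<delta> *\<^sub>R w" unfolding u_def by (simp add: algebra_simps)
    have uw: "u \<bullet> (Ai j *v w) = w \<bullet> (Ai j *v u)" using sym_dot[OF Aisym[OF j]] .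
    have wu: "w \<bullet> (Ai j *v u) = 0" using w0[OF j] vdef u_def by simp
    have "(u + \<delta> *\<^sub>R w) \<bullet> (Ai j *v (u + \<delta> *\<^sub>R w))
        = u \<bullet> (Ai j *v u) + \<delta> * (u \<bullet> (Ai j *v w)) + \<delta> * (w \<bullet> (Ai j *v u))
          + \<delta> * \<delta> * (w \<bullet> (Ai j *v w))"
      by (simp add: matrix_vector_right_distrib matrix_vector_mult_scaleR inner_add_left
          inner_add_right algebra_simps)
    also have "\<dots> = u \<bullet> (Ai j *v u) + \<delta> * \<delta> * (w \<bullet> (Ai j *v w))" using uw wu by simp
    also have "\<dots> \<ge> u \<bullet> (Ai j *v u)" using Aipsd[OF j, of w] by simp
    finally show ?thesis by (simp only: e u_def[symmetric])
  qed
  have "mixture_density K p mu Sig (xs + \<delta> *\<^sub>R w) \<le> mixture_density K p mu Sig xs"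
    unfolding mixture_density_def normal_density_def
  proof (rule sum_mono)
    fix j assume "j \<in> {..<K}"
    then have j: "j < K" by simp
    have "exp (- (1/2) * ((xs + \<delta> *\<^sub>R w - mu j) \<bullet> (Ai j *v (xs + \<delta> *\<^sub>R w - mu j))))
        \<le> exp (- (1/2) * ((xs - mu j) \<bullet> (Ai j *v (xs - mu j))))"
      using quad[OF j] by simp
    then have "exp (- (1/2) * ((xs + \<delta> *\<^sub>R w - mu j) \<bullet> (Ai j *v (xs + \<delta> *\<^sub>R w - mu j))))
          / sqrt ((2 * pi) ^ CARD('n) * det (Sig j))
        \<le> exp (- (1/2) * ((xs - mu j) \<bullet> (Ai j *v (xs - mu j))))
          / sqrt ((2 * pi) ^ CARD('n) * det (Sig j))"
    proof (rule divide_right_mono)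
      have "det (Sig j) > 0" using pd_det_pos assms(4) j by blast
      then show "0 \<le> sqrt ((2 * pi) ^ CARD('n) * det (Sig j))" by simp
    qed
    then show "p j * (exp (- (1/2) * ((xs + \<delta> *\<^sub>R w - mu j) \<bullet> (matrix_inv (Sig j) *v (xs + \<delta> *\<^sub>R w - mu j))))
          / sqrt ((2 * pi) ^ CARD('n) * det (Sig j)))
        \<le> p j * (exp (- (1/2) * ((xs - mu j) \<bullet> (matrix_inv (Sig j) *v (xs - mu j))))
          / sqrt ((2 * pi) ^ CARD('n) * det (Sig j)))"
      unfolding Ai_def using assms(2) j by (intro mult_left_mono) auto
  qed
  then show "mixture_density K p mu Sig (ridgeline K alpha mu Sig + \<delta> *\<^sub>R w) \<le> mixture_density K p mu Sig (ridgeline K alpha mu Sig)" unfolding xs_def .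
qed

end
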